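(* Consider, for parameters $p>0$ and $r>0$, the planar system $$\dot x = -x-y,\qquad \dot y = ry+px-x^2y .$$ (i) For each fixed $p>1$, as $r$ crosses $1$ the equilibrium $(0,0)$ undergoes a supercritical Hopf bifurcation (negative first Lyapunov coefficient), with natural frequency $\omega^*=\sqrt{p-1}$. (ii) For each fixed $r>1$, as $p$ crosses $1$ the two equilibria $(\pm\sqrt{r-p},\mp\sqrt{r-p})$ each undergo a subcritical Hopf bifurcation (positive first Lyapunov coefficient), with natural frequency $\omega^*=\sqrt{2(r-1)}$.
   Context: This is the simplified symmetric two-dimensional Maasch–Saltzman model. The equilibria $(\pm\sqrt{r-p},\mp\sqrt{r-p})$ exist when $r>p$. *)

theory Defs
  imports "HOL-Analysis.Analysis"
begin

text \<open>Planar vector fields are given by two component functions u v :: real => real => real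
  (the field is (x,y) |-> (u x y, v x y)).  Partial derivatives are taken coordinatewise.\<close>

definition dx :: "(real \<Rightarrow> real \<Rightarrow> real) \<Rightarrow> real \<Rightarrow> real \<Rightarrow> real" where
  "dx h = (\<lambda>x y. deriv (\<lambda>t. h t y) x)"

definition dy :: "(real \<Rightarrow> real \<Rightarrow> real) \<Rightarrow> real \<Rightarrow> real \<Rightarrow> real" where
  "dy h = (\<lambda>x y. deriv (\<lambda>t. h x t) y)"

definition tr2 :: "(real \<Rightarrow> real \<Rightarrow> real) \<Rightarrow> (real \<Rightarrow> real \<Rightarrow> real) \<Rightarrow> real \<Rightarrow> real \<Rightarrow> real" where
  "tr2 u v x y = dx u x y + dy v x y"

definition det2 :: "(real \<Rightarrow> real \<Rightarrow> real) \<Rightarrow> (real \<Rightarrow> real \<Rightarrow> real) \<Rightarrow> real \<Rightarrow> real \<Rightarrow> real" where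
  "det2 u v x y = dx u x y * dy v x y - dy u x y * dx v x y"

definition Bform :: "(real \<Rightarrow> real \<Rightarrow> real) \<Rightarrow> real \<Rightarrow> real \<Rightarrow> complex \<times> complex \<Rightarrow> complex \<times> complex \<Rightarrow> complex" where
  "Bform h x y a b =
     of_real (dx (dx h) x y) * fst a * fst b
   + of_real (dy (dx h) x y) * (fst a * snd b + snd a * fst b)
   + of_real (dy (dy h) x y) * snd a * snd b"

definition Cform :: "(real \<Rightarrow> real \<Rightarrow> real) \<Rightarrow> real \<Rightarrow> real \<Rightarrow> complex \<times> complex \<Rightarrow> complex \<times> complex \<Rightarrow> complex \<times> complex \<Rightarrow> complex" where
  "Cform h x y a b c =
     of_real (dx (dx (dx h)) x y) * fst a * fst b * fst c
   + of_real (dy (dx (dx h)) x y) * (fst a * fst b * snd c + fst a * snd b * fst c + snd a * fst b * fst c)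
   + of_real (dy (dy (dx h)) x y) * (fst a * snd b * snd c + snd a * fst b * snd c + snd a * snd b * fst c)
   + of_real (dy (dy (dy h)) x y) * snd a * snd b * snd c"

definition cinner :: "complex \<times> complex \<Rightarrow> complex \<times> complex \<Rightarrow> complex" where
  "cinner p q = cnj (fst p) * fst q + cnj (snd p) * snd q"

text \<open>Kuznetsov's normalised eigenvectors: A q = i w q, A^T p = -i w p, <p,q> = 1, <q,q> = 1.\<close>

definition lyap_vectors ::
  "(real \<Rightarrow> real \<Rightarrow> real) \<Rightarrow> (real \<Rightarrow> real \<Rightarrow> real) \<Rightarrow> real \<Rightarrow> real \<Rightarrow> real
   \<Rightarrow> complex \<times> complex \<Rightarrow> complex \<times> complex \<Rightarrow> bool" where
  "lyap_vectors u v x y w q p \<longleftrightarrow>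
     of_real (dx u x y) * fst q + of_real (dy u x y) * snd q = \<i> * of_real w * fst q \<and>
     of_real (dx v x y) * fst q + of_real (dy v x y) * snd q = \<i> * of_real w * snd q \<and>
     of_real (dx u x y) * fst p + of_real (dx v x y) * snd p = - \<i> * of_real w * fst p \<and>
     of_real (dy u x y) * fst p + of_real (dy v x y) * snd p = - \<i> * of_real w * snd p \<and>
     cinner p q = 1 \<and> cinner q q = 1"

text \<open>First Lyapunov coefficient at an equilibrium (x,y) with purely imaginary eigenvalues
  +-i w, w = sqrt(det): l1 = Re(i g20 g11 + w g21) / (2 w^2) (Kuznetsov, Elements of
  Applied Bifurcation Theory, (3.20)), with g20 = <p,B(q,q)>, g11 = <p,B(q,conj q)>,
  g21 = <p,C(q,q,conj q)>.\<close>

definition first_lyapunov_coefficient ::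
  "(real \<Rightarrow> real \<Rightarrow> real) \<Rightarrow> (real \<Rightarrow> real \<Rightarrow> real) \<Rightarrow> real \<Rightarrow> real \<Rightarrow> real" where
  "first_lyapunov_coefficient u v x y =
     (let w = sqrt (det2 u v x y);
          qp = (SOME qp. lyap_vectors u v x y w (fst qp) (snd qp));
          q = fst qp; p = snd qp;
          qb = (cnj (fst q), cnj (snd q));
          g20 = cinner p (Bform u x y q q, Bform v x y q q);
          g11 = cinner p (Bform u x y q qb, Bform v x y q qb);
          g21 = cinner p (Cform u x y q q qb, Cform v x y q q qb)
      in Re (\<i> * g20 * g11 + of_real w * g21) / (2 * w ^ 2))"

text \<open>Hopf bifurcation of the family (x,y)' = (F mu x y, G mu x y) at mu = mu0 at the equilibrium
  (x0,y0), with natural frequency w: eigenvalues +-i w (w > 0) at mu0, a continuous branch of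
  equilibria through (x0,y0), and the real part of the eigenvalues along the branch
  (= trace/2) crosses zero with nonzero speed.\<close>

definition hopf_bifurcation ::
  "(real \<Rightarrow> real \<Rightarrow> real \<Rightarrow> real) \<Rightarrow> (real \<Rightarrow> real \<Rightarrow> real \<Rightarrow> real) \<Rightarrow> real \<Rightarrow> real \<Rightarrow> real \<Rightarrow> real \<Rightarrow> bool" where
  "hopf_bifurcation F G mu0 x0 y0 w \<longleftrightarrow>
     F mu0 x0 y0 = 0 \<and> G mu0 x0 y0 = 0 \<and>
     w > 0 \<and> tr2 (F mu0) (G mu0) x0 y0 = 0 \<and> det2 (F mu0) (G mu0) x0 y0 = w ^ 2 \<and>
     (\<exists>e > 0. \<exists>X Y. X mu0 = x0 \<and> Y mu0 = y0 \<and>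
        continuous_on (ball mu0 e) X \<and> continuous_on (ball mu0 e) Y \<and>
        (\<forall>mu \<in> ball mu0 e. F mu (X mu) (Y mu) = 0 \<and> G mu (X mu) (Y mu) = 0) \<and>
        (\<exists>d. d \<noteq> 0 \<and>
           ((\<lambda>mu. tr2 (F mu) (G mu) (X mu) (Y mu) / 2) has_real_derivative d) (at mu0)))"

definition supercritical_hopf where
  "supercritical_hopf F G mu0 x0 y0 w \<longleftrightarrow>
     hopf_bifurcation F G mu0 x0 y0 w \<and> first_lyapunov_coefficient (F mu0) (G mu0) x0 y0 < 0"

definition subcritical_hopf where
  "subcritical_hopf F G mu0 x0 y0 w \<longleftrightarrow>
     hopf_bifurcation F G mu0 x0 y0 w \<and> first_lyapunov_coefficient (F mu0) (G mu0) x0 y0 > 0"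

end

theory Submission
  imports Defs
begin

definition GG :: "real \<Rightarrow> real \<Rightarrow> real \<Rightarrow> real \<Rightarrow> real" where
  "GG a b x y = b*y + a*x - x^2*y"
definition FF :: "real \<Rightarrow> real \<Rightarrow> real" where "FF x y = - x - y"

lemma dx_const: "dx (\<lambda>x y. c) = (\<lambda>x y. 0)" by (simp add: dx_def)
lemma dy_const: "dy (\<lambda>x y. c) = (\<lambda>x y. 0)" by (simp add: dy_def)
lemma dx_FF: "dx FF = (\<lambda>x y. -1)"
  unfolding dx_def FF_def by (intro ext DERIV_imp_deriv derivative_eq_intros) auto
lemma dy_FF: "dy FF = (\<lambda>x y. -1)"
  unfolding dy_def FF_def by (intro ext DERIV_imp_deriv derivative_eq_intros) auto
lemma dx_GG: "dx (GG a b) = (\<lambda>x y. a - 2*x*y)"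
  unfolding dx_def GG_def by (intro ext DERIV_imp_deriv derivative_eq_intros) auto
lemma dy_GG: "dy (GG a b) = (\<lambda>x y. b - x^2)"
  unfolding dy_def GG_def by (intro ext DERIV_imp_deriv derivative_eq_intros) auto
lemma dx_l1: "dx (\<lambda>x y. a - 2*x*y) = (\<lambda>x y. -2*y)"
  unfolding dx_def by (intro ext DERIV_imp_deriv derivative_eq_intros) auto
lemma dy_l1: "dy (\<lambda>x y. a - 2*x*y) = (\<lambda>x y. -2*x)"
  unfolding dy_def by (intro ext DERIV_imp_deriv derivative_eq_intros) auto
lemma dy_l2: "dy (\<lambda>x y. b - x^2) = (\<lambda>x y. 0)"
  unfolding dy_def by (intro ext DERIV_imp_deriv derivative_eq_intros) auto
lemma dx_l3: "dx (\<lambda>x y. -2*y) = (\<lambda>x y. 0)"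
  unfolding dx_def by (intro ext DERIV_imp_deriv derivative_eq_intros) auto
lemma dy_l3: "dy (\<lambda>x y. -2*y) = (\<lambda>x y. -2)"
  unfolding dy_def by (intro ext DERIV_imp_deriv derivative_eq_intros) auto
lemma dy_l4: "dy (\<lambda>x y. -2*x) = (\<lambda>x y. 0)"
  unfolding dy_def by (intro ext DERIV_imp_deriv derivative_eq_intros) auto
lemmas derivs = dx_const dy_const dx_FF dy_FF dx_GG dy_GG dx_l1 dy_l1 dy_l2 dx_l3 dy_l3 dy_l4

lemma core:
  fixes w A al be :: real and q1 q2 p1 p2 :: complex
  assumes w: "w > 0" "w^2 = A - 1"
  and e1: "- q1 - q2 = \<i> * of_real w * q1"
  and e4: "- p1 + p2 = - \<i> * of_real w * p2"
  and e5: "cnj p1 * q1 + cnj p2 * q2 = 1"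
  and e6: "cnj q1 * q1 + cnj q2 * q2 = 1"
  shows "Re (\<i> * (cnj p2 * (of_real al * q1 * q1 + of_real be * (q1 * q2 + q2 * q1)))
            * (cnj p2 * (of_real al * q1 * cnj q1 + of_real be * (q1 * cnj q2 + q2 * cnj q1)))
          + of_real w * (cnj p2 * (-2 * (q1 * q1 * cnj q2 + q1 * q2 * cnj q1 + q2 * q1 * cnj q1))))
       = (- be * (al - 2*be) / (2*w) - w) / (2 + w^2)"
proof -
  have h2: "q2 = - (1 + \<i> * of_real w) * q1" using e1 by (simp add: algebra_simps)
  have h1: "p1 = (1 + \<i> * of_real w) * p2" using e4 by (simp add: algebra_simps)
  define Z where "Z = cnj p2 * q1"
  define N where "N = cnj q1 * q1"
  have cq2: "cnj q2 = - (1 - \<i> * of_real w) * cnj q1" by (simp add: h2)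
  have cp1: "cnj p1 = (1 - \<i> * of_real w) * cnj p2" by (simp add: h1)
  have "Z * (-2 * \<i> * of_real w) = 1" using e5 unfolding Z_def cp1 h2
    by (simp add: algebra_simps)
  moreover have "(-2 * \<i> * of_real w) * (\<i>/(2* of_real w)) = 1" using w by (simp add: field_simps)
  ultimately have Zv: "Z = \<i> / (2 * of_real w)"
    by (metis mult.assoc mult_1_left mult_1_right)
  have ii: "(1 - \<i> * of_real w) * (1 + \<i> * of_real w) = 1 + of_real (w^2)"
    by (simp add: algebra_simps power2_eq_square)
  have "N * (2 + of_real (w^2)) = 1" using e6 unfolding N_def cq2 h2
    using ii by (simp add: algebra_simps)
  hence Nv: "N = of_real (1/(2+w^2))"
  proof -
    have "2 + w^2 > 0" by (simp add: add_pos_nonneg)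
    hence "(2 + of_real (w^2) :: complex) \<noteq> 0"
      by (metis of_real_add of_real_eq_0_iff of_real_numeral less_irrefl)
    thus ?thesis using \<open>N * (2 + of_real (w^2)) = 1\<close>
      by (simp add: field_simps)
  qed
  have E: "\<i> * (cnj p2 * (of_real al * q1 * q1 + of_real be * (q1 * q2 + q2 * q1)))
            * (cnj p2 * (of_real al * q1 * cnj q1 + of_real be * (q1 * cnj q2 + q2 * cnj q1)))
          + of_real w * (cnj p2 * (-2 * (q1 * q1 * cnj q2 + q1 * q2 * cnj q1 + q2 * q1 * cnj q1)))
      = \<i> * Z^2 * N * (of_real al - 2 * of_real be * (1 + \<i> * of_real w)) * (of_real al - 2 * of_real be)
        + of_real w * Z * N * 2 * (3 + \<i> * of_real w)"
    unfolding Z_def N_def by (simp only: cq2, simp only: h2) algebra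
  define c where "c = 1/(2*w)"
  define n where "n = 1/(2+w^2)"
  have c2: "c * (2*w) = 1" unfolding c_def using w by simp
  have Zv': "Z = \<i> * of_real c" unfolding Zv c_def by (simp add: field_simps)
  have F: "Re (\<i> * Z^2 * N * (of_real al - 2 * of_real be * (1 + \<i> * of_real w)) * (of_real al - 2 * of_real be)
        + of_real w * Z * N * 2 * (3 + \<i> * of_real w))
     = n * (- be * (al - 2*be) * c - w)"
    unfolding Zv' Nv n_def[symmetric]
    apply (simp add: power2_eq_square)
    using c2 by algebra
  have G: "n * (- be * (al - 2*be) * c - w) = (- be * (al - 2*be) / (2*w) - w) / (2 + w^2)"
    unfolding n_def c_def by (simp add: field_simps)
  show ?thesis unfolding E F G ..
qed
lemma l1:
  fixes a b x0 y0 w :: real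
  assumes w: "w > 0" and hA: "a - 2*x0*y0 = 1 + w^2" and hb: "b - x0^2 = 1"
  shows "first_lyapunov_coefficient FF (GG a b) x0 y0
     = ((- (-2*x0) * ((-2*y0) - 2*(-2*x0)) / (2*w) - w) / (2 + w^2)) / (2*w^2)"
proof -
  have det: "det2 FF (GG a b) x0 y0 = w^2" by (simp add: det2_def hA hb derivs)
  have sw: "sqrt (det2 FF (GG a b) x0 y0) = w" using w by (simp add: det)
  define k where "k = 1 / sqrt (2 + w^2)"
  have kpos: "k > 0" unfolding k_def by (simp add: add_pos_nonneg)
  have k2: "k * k * (2 + w^2) = 1"
  proof -
    have s: "sqrt (2+w^2) * sqrt (2+w^2) = 2 + w^2"
      by (metis abs_of_nonneg add_nonneg_nonneg real_sqrt_mult_self zero_le_numeral zero_le_power2)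
    have "2 + w^2 > 0" by (simp add: add_pos_nonneg)
    thus ?thesis unfolding k_def using s by (simp add: field_simps)
  qed
  have ex: "\<exists>qp. lyap_vectors FF (GG a b) x0 y0 w (fst qp) (snd qp)"
  proof (rule exI[of _ "((Complex k 0, Complex (-k) (-w*k)), (Complex (1/(2*k)) (-1/(2*w*k)), Complex 0 (-1/(2*w*k))))"])
    show "lyap_vectors FF (GG a b) x0 y0 w (fst ((Complex k 0, Complex (-k) (-w*k)), (Complex (1/(2*k)) (-1/(2*w*k)), Complex 0 (-1/(2*w*k)))))
      (snd ((Complex k 0, Complex (-k) (-w*k)), (Complex (1/(2*k)) (-1/(2*w*k)), Complex 0 (-1/(2*w*k)))))"
      unfolding lyap_vectors_def cinner_def using w kpos k2
      apply (simp add: complex_eq_iff hA hb derivs)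
      apply (intro conjI)
        apply (simp add: algebra_simps power2_eq_square)
       apply (simp add: field_simps power2_eq_square)
      apply (simp add: algebra_simps power2_eq_square)
      done
  qed
  define qp where "qp = (SOME qp. lyap_vectors FF (GG a b) x0 y0 w (fst qp) (snd qp))"
  have lv: "lyap_vectors FF (GG a b) x0 y0 w (fst qp) (snd qp)"
    unfolding qp_def using someI_ex[OF ex] .
  obtain q1 q2 p1 p2 where qpe: "qp = ((q1,q2),(p1,p2))" by (metis prod.collapse)
  have L: "- q1 - q2 = \<i> * of_real w * q1" "- p1 + p2 = - \<i> * of_real w * p2"
    "cnj p1 * q1 + cnj p2 * q2 = 1" "cnj q1 * q1 + cnj q2 * q2 = 1"
    using lv unfolding qpe lyap_vectors_def cinner_def by (simp_all add: hA hb derivs)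
  have g20: "cinner (p1,p2) (Bform FF x0 y0 (q1,q2) (q1,q2), Bform (GG a b) x0 y0 (q1,q2) (q1,q2))
     = cnj p2 * (of_real (-2*y0) * q1 * q1 + of_real (-2*x0) * (q1 * q2 + q2 * q1))"
    by (simp add: Bform_def cinner_def derivs)
  have g11: "cinner (p1,p2) (Bform FF x0 y0 (q1,q2) (cnj q1, cnj q2), Bform (GG a b) x0 y0 (q1,q2) (cnj q1, cnj q2))
     = cnj p2 * (of_real (-2*y0) * q1 * cnj q1 + of_real (-2*x0) * (q1 * cnj q2 + q2 * cnj q1))"
    by (simp add: Bform_def cinner_def derivs)
  have g21: "cinner (p1,p2) (Cform FF x0 y0 (q1,q2) (q1,q2) (cnj q1, cnj q2), Cform (GG a b) x0 y0 (q1,q2) (q1,q2) (cnj q1, cnj q2))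
     = cnj p2 * (-2 * (q1 * q1 * cnj q2 + q1 * q2 * cnj q1 + q2 * q1 * cnj q1))"
    unfolding Cform_def by (simp only: derivs) (simp add: cinner_def)
  have C: "Re (\<i> * (cnj p2 * (of_real (-2*y0) * q1 * q1 + of_real (-2*x0) * (q1 * q2 + q2 * q1)))
            * (cnj p2 * (of_real (-2*y0) * q1 * cnj q1 + of_real (-2*x0) * (q1 * cnj q2 + q2 * cnj q1)))
          + of_real w * (cnj p2 * (-2 * (q1 * q1 * cnj q2 + q1 * q2 * cnj q1 + q2 * q1 * cnj q1))))
       = (- (-2*x0) * ((-2*y0) - 2*(-2*x0)) / (2*w) - w) / (2 + w^2)"
    by (rule core[OF w _ L, of "a - 2*x0*y0"]) (simp add: hA)
  show ?thesis
    unfolding first_lyapunov_coefficient_def Let_def sw qp_def[symmetric] qpe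
    unfolding prod.sel g20 g11 g21 C ..
qed
lemma part1:
  fixes p :: real assumes p: "p > 1"
  shows "supercritical_hopf (\<lambda>r. FF) (\<lambda>r. GG p r) 1 0 0 (sqrt (p - 1))"
proof -
  define w where "w = sqrt (p - 1)"
  have w: "w > 0" "w^2 = p - 1" using p unfolding w_def by auto
  have hopf: "hopf_bifurcation (\<lambda>r. FF) (\<lambda>r. GG p r) 1 0 0 w"
    unfolding hopf_bifurcation_def
  proof (intro conjI)
    show "FF 0 0 = 0" "GG p 1 0 0 = 0" by (simp_all add: FF_def GG_def)
    show "w > 0" by (rule w)
    show "tr2 FF (GG p 1) 0 0 = 0" by (simp add: tr2_def derivs)
    show "det2 FF (GG p 1) 0 0 = w^2" by (simp add: det2_def derivs w)
    show "\<exists>e>0. \<exists>X Y. X 1 = 0 \<and> Y 1 = 0 \<and>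
        continuous_on (ball 1 e) X \<and> continuous_on (ball 1 e) Y \<and>
        (\<forall>mu\<in>ball 1 e. FF (X mu) (Y mu) = 0 \<and> GG p mu (X mu) (Y mu) = 0) \<and>
        (\<exists>d. d \<noteq> 0 \<and> ((\<lambda>mu. tr2 FF (GG p mu) (X mu) (Y mu) / 2) has_real_derivative d) (at 1))"
    proof (rule exI[of _ 1], intro conjI exI[of _ "\<lambda>_. 0"])
      have "((\<lambda>mu. tr2 FF (GG p mu) 0 0 / 2) has_real_derivative 1/2) (at 1)"
        by (simp add: tr2_def derivs) (rule derivative_eq_intros refl | simp)+
      thus "\<exists>d. d \<noteq> 0 \<and> ((\<lambda>mu. tr2 FF (GG p mu) 0 0 / 2) has_real_derivative d) (at 1)"
        by (intro exI[of _ "1/2"]) auto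
    qed (auto simp: FF_def GG_def)
  qed
  have "first_lyapunov_coefficient FF (GG p 1) 0 0
     = ((- (-2*0) * ((-2*0) - 2*(-2*0)) / (2*w) - w) / (2 + w^2)) / (2*w^2)"
    by (rule l1) (use w in auto)
  also have "\<dots> < 0" using w(1)
    by (simp add: divide_neg_pos add_pos_nonneg)
  finally show ?thesis unfolding supercritical_hopf_def w_def[symmetric] using hopf by simp
qed

lemma part2:
  fixes r sg :: real assumes r: "r > 1" and sg: "sg = 1 \<or> sg = -1"
  shows "subcritical_hopf (\<lambda>p. FF) (\<lambda>p. GG p r) 1 (sg * sqrt (r - 1)) (- (sg * sqrt (r - 1))) (sqrt (2 * (r - 1)))"
proof -
  define w where "w = sqrt (2 * (r - 1))"
  define s where "s = sqrt (r - 1)"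
  have s: "s > 0" "s^2 = r - 1" using r unfolding s_def by auto
  have w: "w > 0" "w^2 = 2 * s^2" using r s unfolding w_def by auto
  have sg2: "sg * sg = 1" using sg by auto
  have sgc: "\<And>c. sg * (sg * c) = c" using sg2 by (metis mult.assoc mult_1)
  have x2: "(sg * s)^2 = s^2" using sg2 by (simp add: power2_eq_square algebra_simps)
  have hopf: "hopf_bifurcation (\<lambda>p. FF) (\<lambda>p. GG p r) 1 (sg * s) (- (sg * s)) w"
    unfolding hopf_bifurcation_def
  proof (intro conjI)
    show "FF (sg * s) (- (sg * s)) = 0" by (simp add: FF_def)
    have "GG 1 r (sg * s) (- (sg * s)) = (sg * s) * (1 - r + (sg * s)^2)"
      by (simp add: GG_def power2_eq_square algebra_simps)
    thus "GG 1 r (sg * s) (- (sg * s)) = 0" using s x2 by simp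
    show "w > 0" by (rule w)
    show "tr2 FF (GG 1 r) (sg * s) (- (sg * s)) = 0" using s x2 by (simp add: tr2_def derivs)
    show "det2 FF (GG 1 r) (sg * s) (- (sg * s)) = w^2" using s w
      by (simp add: det2_def derivs power2_eq_square algebra_simps sgc sg2)
    define X where "X = (\<lambda>mu. sg * sqrt (r - mu))"
    have X2: "X mu ^ 2 = r - mu" if "mu < r" for mu
      using that sg2 unfolding X_def by (simp add: power2_eq_square algebra_simps)
    have bl: "mu < r" if "mu \<in> ball 1 (r - 1)" for mu
      using that by (auto simp: dist_real_def)
    show "\<exists>e>0. \<exists>X Y. X 1 = sg * s \<and> Y 1 = - (sg * s) \<and>
        continuous_on (ball 1 e) X \<and> continuous_on (ball 1 e) Y \<and>
        (\<forall>mu\<in>ball 1 e. FF (X mu) (Y mu) = 0 \<and> GG mu r (X mu) (Y mu) = 0) \<and>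
        (\<exists>d. d \<noteq> 0 \<and> ((\<lambda>mu. tr2 FF (GG mu r) (X mu) (Y mu) / 2) has_real_derivative d) (at 1))"
    proof (rule exI[of _ "r - 1"], rule conjI)
      show "r - 1 > 0" using r by simp
      show "\<exists>X Y. X 1 = sg * s \<and> Y 1 = - (sg * s) \<and>
        continuous_on (ball 1 (r - 1)) X \<and> continuous_on (ball 1 (r - 1)) Y \<and>
        (\<forall>mu\<in>ball 1 (r - 1). FF (X mu) (Y mu) = 0 \<and> GG mu r (X mu) (Y mu) = 0) \<and>
        (\<exists>d. d \<noteq> 0 \<and> ((\<lambda>mu. tr2 FF (GG mu r) (X mu) (Y mu) / 2) has_real_derivative d) (at 1))"
    proof (rule exI[of _ X], rule exI[of _ "\<lambda>mu. - X mu"], intro conjI ballI)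
      show "X 1 = sg * s" "- X 1 = - (sg * s)" unfolding X_def s_def by simp_all
      show "continuous_on (ball 1 (r - 1)) X" "continuous_on (ball 1 (r - 1)) (\<lambda>mu. - X mu)"
        unfolding X_def by (intro continuous_intros)+
      fix mu :: real assume mu: "mu \<in> ball 1 (r - 1)"
      show "FF (X mu) (- X mu) = 0" by (simp add: FF_def)
      have "GG mu r (X mu) (- X mu) = X mu * (mu - r + X mu ^ 2)"
        by (simp add: GG_def power2_eq_square algebra_simps)
      thus "GG mu r (X mu) (- X mu) = 0" using X2[OF bl[OF mu]] by simp
    next
      have "((\<lambda>mu. (mu - 1) / 2) has_real_derivative 1/2) (at 1)"
        by (rule derivative_eq_intros refl | simp)+
      hence "((\<lambda>mu. tr2 FF (GG mu r) (X mu) (- X mu) / 2) has_real_derivative 1/2) (at 1)"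
      proof (rule has_field_derivative_transform_within_open)
        show "open (ball (1::real) (r - 1))" by simp
        show "1 \<in> ball (1::real) (r - 1)" using r by simp
        fix mu :: real assume mu: "mu \<in> ball (1::real) (r - 1)"
        show "(mu - 1) / 2 = tr2 FF (GG mu r) (X mu) (- X mu) / 2"
          using X2[OF bl[OF mu]] by (simp add: tr2_def derivs)
      qed
      thus "\<exists>d. d \<noteq> 0 \<and> ((\<lambda>mu. tr2 FF (GG mu r) (X mu) (- X mu) / 2) has_real_derivative d) (at 1)"
        by (intro exI[of _ "1/2"]) auto
    qed
    qed
  qed
  have "first_lyapunov_coefficient FF (GG 1 r) (sg * s) (- (sg * s))
     = ((- (-2*(sg * s)) * ((-2*(- (sg * s))) - 2*(-2*(sg * s))) / (2*w) - w) / (2 + w^2)) / (2*w^2)"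
    by (rule l1) (use w s x2 in \<open>auto simp: algebra_simps power2_eq_square\<close>)
  also have "\<dots> > 0"
  proof -
    have e: "- (-2*(sg * s)) * ((-2*(- (sg * s))) - 2*(-2*(sg * s))) = 6 * w^2"
      using w sg2 by (simp add: power2_eq_square algebra_simps)
    have "6 * w^2 / (2*w) - w = 2 * w" using w(1) by (simp add: power2_eq_square field_simps)
    thus ?thesis unfolding e using w(1) by (simp add: add_pos_nonneg)
  qed
  finally show ?thesis unfolding subcritical_hopf_def w_def[symmetric] s_def[symmetric] using hopf by simp
qed

theorem mainTheorem2:
  shows "(\<forall>p::real. p > 1 \<longrightarrow>
            supercritical_hopf (\<lambda>r x y. - x - y) (\<lambda>r x y. r * y + p * x - x ^ 2 * y)
              1 0 0 (sqrt (p - 1)))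
       \<and> (\<forall>r::real. r > 1 \<longrightarrow>
            subcritical_hopf (\<lambda>p x y. - x - y) (\<lambda>p x y. r * y + p * x - x ^ 2 * y)
              1 (sqrt (r - 1)) (- sqrt (r - 1)) (sqrt (2 * (r - 1)))
          \<and> subcritical_hopf (\<lambda>p x y. - x - y) (\<lambda>p x y. r * y + p * x - x ^ 2 * y)
              1 (- sqrt (r - 1)) (sqrt (r - 1)) (sqrt (2 * (r - 1))))"
proof -
  have eF: "(\<lambda>r::real. \<lambda>x y. - x - y) = (\<lambda>r. FF)" by (intro ext) (simp add: FF_def)
  have eG1: "\<And>p. (\<lambda>r x y. r * y + p * x - x ^ 2 * y) = (\<lambda>r. GG p r)" by (intro ext) (simp add: GG_def)
  have eG2: "\<And>r. (\<lambda>p x y. r * y + p * x - x ^ 2 * y) = (\<lambda>p. GG p r)" by (intro ext) (simp add: GG_def)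
  show ?thesis unfolding eF eG1 eG2
    using part1 part2[of _ 1] part2[of _ "-1"] by simp
qed

end
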